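(* Let $\beta=\beta(\alpha)$ be a real function of $\alpha$ such that $c(\alpha)=\alpha-\beta(\alpha)$ satisfies $-1<c(\alpha)\le M$ for some constant $M$ and all large $\alpha$. Then, as $\alpha\to\infty$, \[ I(\alpha,\beta)\sim\left(\frac{6}{\alpha}\right)^{\frac{\alpha-\beta+1}{2}}\Gamma\!\left(\frac{\alpha-\beta+1}{2}\right), \] i.e. the ratio of the two sides tends to $1$. In particular, \[ I(\alpha,[\alpha])\sim\left(\frac{6}{\alpha}\right)^{\frac{\alpha-[\alpha]+1}{2}}\Gamma\!\left(\frac{\alpha-[\alpha]+1}{2}\right),\qquad \alpha\to\infty, \] where $[\alpha]$ denotes the greatest integer not exceeding $\alpha$.
   Context: For real $\alpha,\beta$ with $\alpha>\beta-1>0$, $I(\alpha,\beta)=\int_{-\infty}^{\infty}|\sin t|^{\alpha}|t|^{-\beta}\,dt$; $\Gamma$ denotes the gamma function. *)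

theory Defs
  imports "HOL-Analysis.Analysis"
begin

text \<open>I(alpha,beta) = integral over the real line of abs(sin t)^alpha * abs t^(-beta),
  as a Lebesgue integral w.r.t. Lebesgue-Borel measure (the point t = 0 is a null set).\<close>
definition I_int :: "real \<Rightarrow> real \<Rightarrow> real" where
  "I_int \<alpha> \<beta> = (LBINT t. \<bar>sin t\<bar> powr \<alpha> * \<bar>t\<bar> powr (-\<beta>))"

end

theory Submission
  imports Defs "HOL-Real_Asymp.Real_Asymp"
begin

lemma eq2_aux:
  fixes k x s :: real assumes k: "k > 0" and x: "x > 0"
  shows "\<bar>2*k*x\<bar> * ((k*x\<^sup>2) powr (s-1) / exp (k*x\<^sup>2)) = (2 * k powr s) * (x powr (2 * s - 1) * exp (-k*x\<^sup>2))"
proof -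
  have a: "(k*x\<^sup>2) powr (s-1) = k powr (s-1) * (x\<^sup>2) powr (s-1)"
    using k x by (simp add: powr_mult)
  have b: "(x\<^sup>2) powr (s-1) = x powr (2 * (s-1))"
  proof -
    have "x\<^sup>2 = x powr 2" using x powr_realpow[of x 2] by simp
    thus ?thesis by (simp only: powr_powr)
  qed
  have c: "k * k powr (s-1) = k powr s"
    using k by (simp add: powr_diff)
  have d: "x * x powr (2 * (s-1)) = x powr (2 * s - 1)"
    using x powr_add[of x 1 "2 * (s-1)"] by (simp add: algebra_simps)
  have "\<bar>2*k*x\<bar> * ((k*x\<^sup>2) powr (s-1) / exp (k*x\<^sup>2)) = 2 * (k * k powr (s-1)) * (x * x powr (2 * (s-1))) / exp (k*x\<^sup>2)"
    using k x unfolding a b by (simp add: abs_mult)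
  also have "\<dots> = (2 * k powr s) * (x powr (2 * s - 1) * exp (-k*x\<^sup>2))"
    unfolding c d by (simp add: exp_minus divide_inverse)
  finally show ?thesis .
qed

lemma gauss_gamma:
  fixes k c :: real
  assumes k: "k > 0" and c: "c > -1"
  shows "(\<lambda>t. t powr c * exp (-k*t\<^sup>2)) absolutely_integrable_on {0<..} \<and>
         integral {0<..} (\<lambda>t. t powr c * exp (-k*t\<^sup>2)) = Gamma ((c+1)/2) / (2 * k powr ((c+1)/2))"
proof -
  define s where "s = (c+1)/2"
  have s: "s > 0" using c by (simp add: s_def)
  define f where "f = (\<lambda>u::real. u powr (s - 1) / exp u)"
  have img: "(\<lambda>t. k*t\<^sup>2) ` {0<..} = {0<..}"
  proof
    show "(\<lambda>t. k*t\<^sup>2) ` {0<..} \<subseteq> {0<..}" using k by auto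
    show "{0<..} \<subseteq> (\<lambda>t. k*t\<^sup>2) ` {0<..}"
    proof
      fix u :: real assume "u \<in> {0<..}"
      hence u: "u > 0" by simp
      have "u = k * (sqrt (u/k))\<^sup>2" using u k by simp
      moreover have "sqrt (u/k) \<in> {0<..}" using u k by simp
      ultimately show "u \<in> (\<lambda>t. k*t\<^sup>2) ` {0<..}" by blast
    qed
  qed
  have inj: "inj_on (\<lambda>t. k*t\<^sup>2) {0<..}"
    using k by (auto simp: inj_on_def power2_eq_square) (metis mult_left_cancel less_irrefl power2_eq_square power2_eq_imp_eq less_imp_le)
  have der: "\<And>x. x \<in> {0<..} \<Longrightarrow> ((\<lambda>t. k*t\<^sup>2) has_field_derivative (2*k*x)) (at x within {0<..})"
    by (auto intro!: derivative_eq_intros)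
  have fi: "f absolutely_integrable_on {0<..}"
  proof -
    have "(\<lambda>t. complex_of_real t powr (complex_of_real s - 1) / of_real (exp t)) absolutely_integrable_on {0<..}"
      by (rule absolutely_integrable_Gamma_integral') (use s in simp)
    from absolutely_integrable_linear[OF this bounded_linear_Re]
    have A: "(\<lambda>t. Re (complex_of_real t powr (complex_of_real s - 1) / of_real (exp t))) absolutely_integrable_on {0<..}"
      by (simp add: o_def)
    have eq: "complex_of_real x powr (complex_of_real s - 1) = of_real (x powr (s-1))" if "x > 0" for x
      using powr_of_real[of x "s-1"] that by simp
    show ?thesis
    proof (rule absolutely_integrable_spike[OF A negligible_empty])
      fix x :: real assume "x \<in> {0<..} - {}"
      hence "x > 0" by simp
      have "Re (complex_of_real x powr (complex_of_real s - 1) / of_real (exp x)) = Re (of_real (x powr (s-1) / exp x))"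
        unfolding eq[OF \<open>x > 0\<close>] by simp
      thus "f x = Re (complex_of_real x powr (complex_of_real s - 1) / of_real (exp x))"
        unfolding f_def by (simp only: Re_complex_of_real)
    qed
  qed
  have gi: "(f has_integral Gamma s) {0<..}"
  proof -
    have "(f has_integral Gamma s) {0..}" unfolding f_def by (rule Gamma_integral_real[OF s])
    hence "((\<lambda>t. if t \<in> {0<..} then f t else 0) has_integral Gamma s) {0..}"
      by (rule has_integral_spike [of "{0}", rotated 2]) auto
    also have "?this = ?thesis"
      by (subst has_integral_restrict) auto
    finally show ?thesis .
  qed
  have CV: "(\<lambda>x. \<bar>2*k*x\<bar> * f (k*x\<^sup>2)) absolutely_integrable_on {0<..} \<and>
           integral {0<..} (\<lambda>x. \<bar>2*k*x\<bar> * f (k*x\<^sup>2)) = Gamma s"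
    using has_absolute_integral_change_of_variables_1'[of "{0<..}" "\<lambda>t. k*t\<^sup>2" "\<lambda>x. 2*k*x" f "Gamma s", OF _ der inj]
    unfolding img using fi gi by (auto simp: integral_unique)
  have eq2: "\<bar>2*k*x\<bar> * f (k*x\<^sup>2) = (2 * k powr s) * (x powr c * exp (-k*x\<^sup>2))" if "x > 0" for x
  proof -
    have "2 * s - 1 = c" by (simp add: s_def field_simps)
    thus ?thesis using eq2_aux[OF k that, of s] by (simp add: f_def)
  qed
  have A: "(\<lambda>x. (2 * k powr s) * (x powr c * exp (-k*x\<^sup>2))) absolutely_integrable_on {0<..}"
     and B: "integral {0<..} (\<lambda>x. (2 * k powr s) * (x powr c * exp (-k*x\<^sup>2))) = Gamma s"
  proof -
    show "(\<lambda>x. (2 * k powr s) * (x powr c * exp (-k*x\<^sup>2))) absolutely_integrable_on {0<..}"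
      by (rule absolutely_integrable_spike[OF conjunct1[OF CV] negligible_empty]) (simp add: eq2)
    have "integral {0<..} (\<lambda>x. (2 * k powr s) * (x powr c * exp (-k*x\<^sup>2))) =
          integral {0<..} (\<lambda>x. \<bar>2*k*x\<bar> * f (k*x\<^sup>2))"
      by (rule integral_cong) (simp add: eq2)
    thus "integral {0<..} (\<lambda>x. (2 * k powr s) * (x powr c * exp (-k*x\<^sup>2))) = Gamma s"
      using CV by simp
  qed
  have kp: "k powr s > 0" using k by simp
  have A1: "(\<lambda>x. (2 * k powr s) * (x powr c * exp (-k*x\<^sup>2))) integrable_on {0<..}"
    using A by (simp add: absolutely_integrable_on_def)
  have A2: "(\<lambda>x. inverse (2 * k powr s) * ((2 * k powr s) * (x powr c * exp (-k*x\<^sup>2)))) integrable_on {0<..}"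
    using integrable_on_cmult_left[OF A1, of "inverse (2 * k powr s)"] by (simp add: o_def)
  hence A3: "(\<lambda>x. x powr c * exp (-k*x\<^sup>2)) integrable_on {0<..}" using kp by simp
  have "integral {0<..} (\<lambda>x. x powr c * exp (-k*x\<^sup>2)) = inverse (2 * k powr s) * integral {0<..} (\<lambda>x. (2 * k powr s) * (x powr c * exp (-k*x\<^sup>2)))"
    using kp by (simp add: integral_mult_right)
  also have "\<dots> = Gamma s / (2 * k powr s)" unfolding B by (simp add: field_simps)
  finally show ?thesis using A3 unfolding s_def
    by (auto simp: absolutely_integrable_on_def intro: integrable_eq[OF A3])
qed

definition FF :: "real \<Rightarrow> real \<Rightarrow> real \<Rightarrow> real" where
  "FF a b t = \<bar>sin t\<bar> powr a * \<bar>t\<bar> powr (-b)"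

lemma FF_nonneg: "FF a b t \<ge> 0" by (simp add: FF_def)
lemma FF_minus: "FF a b (-t) = FF a b t" by (simp add: FF_def)
lemma FF_meas: "FF a b \<in> borel_measurable borel"
  unfolding FF_def by measurable
lemma FF_meas_on: "FF a b \<in> borel_measurable (lebesgue_on S)"
  by (intro measurable_restrict_space1 measurable_completion) (simp add: FF_meas)

lemma I_int_eq:
  assumes Fint: "FF a b integrable_on {0..}"
  shows "I_int a b = 2 * integral {0..} (FF a b)"
proof -
  define J where "J = integral {0..} (FF a b)"
  have A0: "FF a b absolutely_integrable_on {0..}"
    by (rule nonnegative_absolutely_integrable_1[OF Fint]) (simp add: FF_nonneg)
  have "(\<lambda>x. FF a b (-x)) absolutely_integrable_on {..0} \<and> integral {..0} (\<lambda>x. FF a b (-x)) = J"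
    by (subst has_absolute_integral_reflect_real[of "{..0}" "{0..}"]) (auto simp: A0 J_def)
  hence A1: "FF a b absolutely_integrable_on {..0}" and J1: "integral {..0} (FF a b) = J"
    by (simp_all add: FF_minus)
  have UU: "{..0::real} \<union> {0..} = UNIV" by auto
  have AU: "FF a b absolutely_integrable_on UNIV"
    using absolutely_integrable_Un[OF A1 A0] by (simp only: UU)
  have "(FF a b has_integral (J + J)) ({..0} \<union> {0..})"
  proof (rule has_integral_Un)
    show "(FF a b has_integral J) {..0}" using A1 J1
      by (metis absolutely_integrable_on_def has_integral_integral)
    show "(FF a b has_integral J) {0..}" using A0 unfolding J_def
      by (metis absolutely_integrable_on_def has_integral_integral)
    have "{..0} \<inter> {0..} = {0::real}" by auto
    thus "negligible ({..0} \<inter> {0::real..})" by simp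
  qed
  hence HU: "(FF a b has_integral (2*J)) UNIV" by (simp only: UU mult_2)
  have L: "integrable lebesgue (FF a b)"
    using AU by (simp add: set_integrable_def)
  have "integral UNIV (FF a b) = (\<integral>x. FF a b x \<partial>lebesgue)" by (rule integral_lebesgue[OF L])
  also have "\<dots> = (\<integral>x. FF a b x \<partial>lborel)" 
    by (rule integral_completion) (simp add: FF_meas)
  also have "\<dots> = I_int a b" by (simp add: I_int_def FF_def)
  finally show ?thesis using HU J_def by (simp add: integral_unique)
qed

lemma sc: "sin_coeff 0 = 0" "sin_coeff 1 = 1" "sin_coeff 2 = 0" "sin_coeff 3 = -1/6" "sin_coeff 4 = 0"
  by (simp_all add: sin_coeff_def fact_numeral)
lemma sc1: "sin_coeff (Suc 0) = 1" by (simp add: sin_coeff_def)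

lemma sin_bounds:
  fixes t :: real
  shows "t - t^3/6 - \<bar>t\<bar>^5/120 \<le> sin t" "sin t \<le> t - t^3/6 + \<bar>t\<bar>^5/120"
proof -
  have e: "{..<5::nat} = {0,1,2,3,4}" by auto
  have s: "(\<Sum>m<5. sin_coeff m * t ^ m) = t - t^3/6"
    unfolding e by (simp add: sc sc1)
  have f5: "inverse (fact 5 :: real) = 1/120" by (simp add: fact_numeral)
  have "\<bar>sin t - (t - t^3/6)\<bar> \<le> inverse (fact 5) * \<bar>t\<bar>^5"
    using Maclaurin_sin_bound[of t 5] unfolding s .
  hence "\<bar>sin t - (t - t^3/6)\<bar> \<le> \<bar>t\<bar>^5/120" unfolding f5 by simp
  thus "t - t^3/6 - \<bar>t\<bar>^5/120 \<le> sin t" "sin t \<le> t - t^3/6 + \<bar>t\<bar>^5/120" by linarith+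
qed

lemma sinc_upper:
  fixes t :: real assumes "t > 0"
  shows "sin t / t \<le> 1 - t\<^sup>2/6 + t^4/120"
proof -
  have "sin t \<le> t - t^3/6 + t^5/120" using sin_bounds(2)[of t] assms by simp
  hence "sin t / t \<le> (t - t^3/6 + t^5/120) / t" using assms by (simp add: divide_right_mono)
  also have "\<dots> = 1 - t\<^sup>2/6 + t^4/120" using assms by (simp add: field_simps power_def)
  finally show ?thesis .
qed

lemma sinc_lower:
  fixes t :: real assumes "t > 0"
  shows "1 - (t\<^sup>2/6 + t^4/120) \<le> sin t / t"
proof -
  have "t - t^3/6 - t^5/120 \<le> sin t" using sin_bounds(1)[of t] assms by simp
  hence "(t - t^3/6 - t^5/120) / t \<le> sin t / t" using assms by (simp add: divide_right_mono)
  moreover have "(t - t^3/6 - t^5/120) / t = 1 - (t\<^sup>2/6 + t^4/120)" using assms by (simp add: field_simps power_def)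
  ultimately show ?thesis by simp
qed

lemma FF_split:
  fixes t :: real assumes "0 < t" "t < pi"
  shows "FF a (a - c) t = (sin t / t) powr a * t powr c"
proof -
  have st: "sin t > 0" using assms by (simp add: sin_gt_zero)
  have "FF a (a - c) t = sin t powr a * t powr (c - a)" using assms st by (simp add: FF_def)
  also have "t powr (c - a) = t powr c / t powr a" using assms by (simp add: powr_diff)
  also have "(sin t / t) powr a = sin t powr a / t powr a" using assms st by (simp add: powr_divide)
  ultimately show ?thesis by simp
qed

lemma exp_powr': "exp (u::real) powr (a::real) = exp (a * u)" by (simp add: powr_def)

lemma FF_upper_small:
  fixes t :: real assumes "0 < t" "t \<le> 3/2" "a \<ge> 0"
  shows "FF a (a - c) t \<le> t powr c * exp (a * (- t\<^sup>2/6 + t^4/120))"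
proof -
  have tp: "t < pi" using assms pi_gt3 by linarith
  have st: "sin t > 0" using assms tp by (simp add: sin_gt_zero)
  have "sin t / t \<le> exp (- t\<^sup>2/6 + t^4/120)"
    using sinc_upper[OF assms(1)] exp_ge_add_one_self[of "- t\<^sup>2/6 + t^4/120"] by linarith
  hence "(sin t / t) powr a \<le> exp (- t\<^sup>2/6 + t^4/120) powr a"
    using st assms by (intro powr_mono2) auto
  also have "\<dots> = exp (a * (- t\<^sup>2/6 + t^4/120))" by (rule exp_powr')
  finally have E: "(sin t / t) powr a \<le> exp (a * (- t\<^sup>2/6 + t^4/120))" .
  have "FF a (a - c) t = (sin t / t) powr a * t powr c" by (rule FF_split[OF assms(1) tp])
  also have "\<dots> = t powr c * (sin t / t) powr a" by (rule mult.commute)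
  also have "\<dots> \<le> t powr c * exp (a * (- t\<^sup>2/6 + t^4/120))"
    by (rule mult_left_mono[OF E]) simp
  finally show ?thesis .
qed

lemma FF_lower_small:
  fixes t :: real assumes "0 < t" "t \<le> 1" "a \<ge> 0"
  shows "t powr c * exp (- a * t\<^sup>2/6) * exp (- a * t^4/10) \<le> FF a (a - c) t"
proof -
  have tp: "t < pi" using assms pi_gt3 by linarith
  define x where "x = t\<^sup>2/6 + t^4/120"
  have t2: "t\<^sup>2 \<le> 1" using assms by (simp add: power_le_one)
  have t4: "t^4 \<le> 1" using assms by (simp add: power_le_one)
  have x0: "0 \<le> x" by (simp add: x_def)
  have x1: "x \<le> 1/2" using t2 t4 by (simp add: x_def)
  have "- x - 2 * x\<^sup>2 \<le> ln (1 - x)" by (rule ln_one_minus_pos_lower_bound[OF x0 x1])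
  hence "exp (- x - 2 * x\<^sup>2) \<le> 1 - x" using x1
  proof -
    have "1 - x > 0" using x1 by simp
    hence "exp (ln (1 - x)) = 1 - x" by simp
    moreover have "exp (- x - 2 * x\<^sup>2) \<le> exp (ln (1 - x))" using \<open>- x - 2 * x\<^sup>2 \<le> ln (1 - x)\<close> by simp
    ultimately show ?thesis by simp
  qed
  also have "\<dots> \<le> sin t / t" using sinc_lower[OF assms(1)] by (simp add: x_def)
  finally have A: "exp (- x - 2 * x\<^sup>2) \<le> sin t / t" .
  have xx: "x\<^sup>2 \<le> t^4 * (441/14400)"
  proof -
    have xe: "x = t\<^sup>2 * (1/6 + t\<^sup>2/120)" by (simp add: x_def field_simps power_def)
    have "t\<^sup>2 * (1/6 + t\<^sup>2/120) \<le> t\<^sup>2 * (21/120)" by (rule mult_left_mono) (use t2 in auto)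
    hence xl: "x \<le> t\<^sup>2 * (21/120)" using xe by linarith
    have "x\<^sup>2 \<le> (t\<^sup>2 * (21/120))\<^sup>2" by (rule power_mono[OF xl x0])
    also have "(t\<^sup>2 * (21/120))\<^sup>2 = t^4 * (441/14400)" by (simp add: power_mult_distrib power_def)
    finally show ?thesis .
  qed
  have B1: "2 * x\<^sup>2 \<le> 2 * (t^4 * (441/14400))" using xx by simp
  have t4p: "t^4 \<ge> 0" by simp
  have B: "- t\<^sup>2/6 - t^4/10 \<le> - x - 2 * x\<^sup>2" using B1 t4p unfolding x_def by linarith
  have C0: "exp (- t\<^sup>2/6 - t^4/10) \<le> exp (- x - 2 * x\<^sup>2)" using B by (simp only: exp_le_cancel_iff)
  have C: "exp (- t\<^sup>2/6 - t^4/10) \<le> sin t / t" by (rule order_trans[OF C0 A])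
  have "exp (- t\<^sup>2/6 - t^4/10) powr a \<le> (sin t / t) powr a"
    by (rule powr_mono2[OF assms(3) _ C]) simp
  hence "exp (a * (- t\<^sup>2/6 - t^4/10)) \<le> (sin t / t) powr a" by (simp add: exp_powr')
  moreover have "exp (- a * t\<^sup>2/6) * exp (- a * t^4/10) = exp (a * (- t\<^sup>2/6 - t^4/10))"
    by (simp add: exp_add[symmetric] algebra_simps)
  ultimately have E: "exp (- a * t\<^sup>2/6) * exp (- a * t^4/10) \<le> (sin t / t) powr a" by simp
  have "t powr c * exp (- a * t\<^sup>2/6) * exp (- a * t^4/10) = t powr c * (exp (- a * t\<^sup>2/6) * exp (- a * t^4/10))"
    by (rule mult.assoc)
  also have "\<dots> \<le> t powr c * (sin t / t) powr a"
    by (rule mult_left_mono[OF E]) simp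
  also have "\<dots> = (sin t / t) powr a * t powr c" by (rule mult.commute)
  also have "\<dots> = FF a (a - c) t" by (rule FF_split[OF assms(1) tp, symmetric])
  finally show ?thesis .
qed

lemma FF_upper_tail:
  fixes t :: real assumes "0 < t" "a \<ge> 0"
  shows "FF a b t \<le> t powr (-b)"
proof -
  have "\<bar>sin t\<bar> powr a \<le> 1 powr a" using assms by (intro powr_mono2) auto
  hence "\<bar>sin t\<bar> powr a \<le> 1" by simp
  hence "\<bar>sin t\<bar> powr a * \<bar>t\<bar> powr (-b) \<le> 1 * \<bar>t\<bar> powr (-b)" by (rule mult_right_mono) simp
  thus ?thesis using assms by (simp add: FF_def)
qed

definition hh :: "real \<Rightarrow> real \<Rightarrow> real \<Rightarrow> real" where
  "hh k c t = t powr c * exp (-k*t\<^sup>2)"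

definition HH :: "real \<Rightarrow> real \<Rightarrow> real" where
  "HH k c = Gamma ((c+1)/2) / (2 * k powr ((c+1)/2))"

lemma hh_nonneg: "hh k c t \<ge> 0" by (simp add: hh_def)

lemma gauss_has:
  assumes "k > 0" "c > -1"
  shows "(hh k c has_integral HH k c) {0..}"
proof -
  from gauss_gamma[OF assms] have
    "(\<lambda>t. t powr c * exp (-k*t\<^sup>2)) integrable_on {0<..}"
    "integral {0<..} (\<lambda>t. t powr c * exp (-k*t\<^sup>2)) = HH k c"
    by (auto simp: absolutely_integrable_on_def HH_def)
  hence "(hh k c has_integral HH k c) {0<..}"
    unfolding hh_def by (metis has_integral_integral)
  hence "((\<lambda>x. if x \<in> {0<..} then hh k c x else 0) has_integral HH k c) {0..}"
    by (subst has_integral_restrict_Int) (simp add: Int_absorb2 Ioi_le_Ico)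
  moreover have "\<And>x. x \<in> {0..} \<Longrightarrow> (if x \<in> {0<..} then hh k c x else 0) = hh k c x"
    by (auto simp: hh_def)
  ultimately show ?thesis using has_integral_cong[of "{0..}" "\<lambda>x. if x \<in> {0<..} then hh k c x else 0" "hh k c"] by simp
qed

lemma gauss_int: "k > 0 \<Longrightarrow> c > -1 \<Longrightarrow> hh k c integrable_on {0..}"
  using gauss_has by blast

lemma gauss_integral: "k > 0 \<Longrightarrow> c > -1 \<Longrightarrow> integral {0..} (hh k c) = HH k c"
  using gauss_has by (blast intro: integral_unique)

lemma HH_pos: "k > 0 \<Longrightarrow> c > -1 \<Longrightarrow> HH k c > 0"
proof -
  assume "k > 0" "c > -1"
  hence "Gamma ((c+1)/2) > 0" "k powr ((c+1)/2) > 0" by (simp_all add: Gamma_real_pos)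
  thus ?thesis by (simp add: HH_def)
qed

lemma H_lower:
  fixes a c Mp :: real
  assumes a: "a \<ge> 6" and c: "-1 < c" "c \<le> Mp"
  shows "exp (-1) * (6/a) powr ((Mp+1)/2) / (Mp+1) \<le> HH (a/6) c"
proof -
  define k where "k = a/6"
  define \<sigma> where "\<sigma> = (6/a) powr (1/2)"
  have k: "k > 0" using a by (simp add: k_def)
  have s0: "\<sigma> > 0" using a by (simp add: \<sigma>_def)
  have "(6/a) powr (1/2) \<le> 1 powr (1/2)" using a by (intro powr_mono2) auto
  hence s1: "\<sigma> \<le> 1" unfolding \<sigma>_def by simp
  have s2: "\<sigma>\<^sup>2 = 6/a"
  proof -
    have "\<sigma>\<^sup>2 = \<sigma> powr 2" using s0 powr_realpow[of \<sigma> 2] by simp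
    also have "\<dots> = (6/a) powr (1/2 * 2)" unfolding \<sigma>_def by (rule powr_powr)
    also have "\<dots> = 6/a" using a by simp
    finally show ?thesis .
  qed
  have hint: "hh k c integrable_on {0..\<sigma>}"
    by (rule integrable_on_subinterval[OF gauss_int[OF k c(1)]]) auto
  have P: "((\<lambda>t. exp (-1) * t powr c) has_integral (exp (-1) * (\<sigma> powr (c+1) / (c+1)))) {0..\<sigma>}"
    using has_integral_mult_right[OF has_integral_powr_from_0[of c \<sigma>]] c s0 by simp
  have "exp (-1) * (\<sigma> powr (c+1) / (c+1)) \<le> integral {0..\<sigma>} (hh k c)"
  proof (rule has_integral_le[OF P integrable_integral[OF hint]])
    fix t assume t: "t \<in> {0..\<sigma>}"
    have "t\<^sup>2 \<le> \<sigma>\<^sup>2" using t by (intro power_mono) auto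
    hence "k * t\<^sup>2 \<le> 1" using s2 k a by (simp add: k_def field_simps)
    hence E: "exp (-1) \<le> exp (-k*t\<^sup>2)" by simp
    have "exp (-1) * t powr c \<le> exp (-k*t\<^sup>2) * t powr c" by (rule mult_right_mono[OF E]) simp
    thus "exp (-1) * t powr c \<le> hh k c t" unfolding hh_def by (simp only: mult.commute)
  qed
  also have "\<dots> \<le> integral {0..} (hh k c)"
    by (rule integral_subset_le) (auto simp: hint gauss_int[OF k c(1)] hh_nonneg)
  also have "\<dots> = HH k c" by (rule gauss_integral[OF k c(1)])
  finally have A: "exp (-1) * (\<sigma> powr (c+1) / (c+1)) \<le> HH k c" .
  have B1: "\<sigma> powr (Mp+1) \<le> \<sigma> powr (c+1)" using c s0 s1 by (intro powr_mono') auto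
  have B2: "\<sigma> powr (Mp+1) = (6/a) powr ((Mp+1)/2)" unfolding \<sigma>_def by (simp add: powr_powr)
  have B3: "\<sigma> powr (Mp+1) / (Mp+1) \<le> \<sigma> powr (c+1) / (c+1)"
    using B1 c by (intro frac_le) auto
  have "exp (-1) * (6/a) powr ((Mp+1)/2) / (Mp+1) = exp (-1) * (\<sigma> powr (Mp+1) / (Mp+1))"
    by (simp add: B2)
  also have "\<dots> \<le> exp (-1) * (\<sigma> powr (c+1) / (c+1))" by (rule mult_left_mono[OF B3]) simp
  finally show ?thesis using A by (simp add: k_def)
qed

lemma FF_zero: "FF a b 0 = 0" by (simp add: FF_def)

lemma tpowr_bound:
  fixes t c Mp \<delta> :: real
  assumes "\<delta> \<le> t" "t \<le> 3/2" "0 < \<delta>" "-1 < c" "c \<le> Mp" "0 \<le> Mp"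
  shows "t powr c \<le> 1/\<delta> + (3/2) powr Mp"
proof (cases "t \<le> 1")
  case True
  have "t powr c \<le> t powr (-1)" using assms True by (intro powr_mono') auto
  also have "\<dots> = inverse t" using assms by (simp add: powr_minus)
  also have "\<dots> \<le> inverse \<delta>" using assms by (intro le_imp_inverse_le) auto
  also have "\<dots> = 1/\<delta>" by (simp add: inverse_eq_divide)
  also have "\<dots> \<le> 1/\<delta> + (3/2) powr Mp" by simp
  finally show ?thesis .
next
  case False
  have "t powr c \<le> t powr Mp" using assms False by (intro powr_mono) auto
  also have "\<dots> \<le> (3/2) powr Mp" using assms by (intro powr_mono2) auto
  also have "\<dots> \<le> 1/\<delta> + (3/2) powr Mp" using assms by simp
  finally show ?thesis .
qed

lemma exp_mid_bound:
  fixes t a \<delta> :: real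
  assumes "\<delta> \<le> t" "t \<le> 3/2" "0 < \<delta>" "0 \<le> a"
  shows "exp (a * (- t\<^sup>2/6 + t^4/120)) \<le> exp (- (a * \<delta>\<^sup>2/7))"
proof -
  have t0: "0 \<le> t" using assms by linarith
  have "t\<^sup>2 \<le> (3/2)\<^sup>2" by (rule power_mono) (use assms t0 in auto)
  hence t2: "t\<^sup>2 \<le> 9/4" by (simp add: power2_eq_square)
  have d2: "\<delta>\<^sup>2 \<le> t\<^sup>2" by (rule power_mono) (use assms in auto)
  have t4: "t^4 = t\<^sup>2 * t\<^sup>2" by algebra
  have "t\<^sup>2 * t\<^sup>2 \<le> 9/4 * t\<^sup>2" by (rule mult_right_mono[OF t2]) simp
  hence "- t\<^sup>2/6 + t^4/120 \<le> - (\<delta>\<^sup>2/7)" unfolding t4 using d2 zero_le_power2[of t] by linarith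
  hence "a * (- t\<^sup>2/6 + t^4/120) \<le> a * (- (\<delta>\<^sup>2/7))" by (rule mult_left_mono) (use assms in auto)
  thus ?thesis by simp
qed


lemma FF_upper_int:
  fixes a c Mp \<delta> :: real
  assumes a: "a > 0" and c: "-1 < c" "c \<le> Mp" and Mp: "0 \<le> Mp"
    and d: "0 < \<delta>" "\<delta> \<le> 1" and b: "a - Mp \<ge> 2"
  shows "FF a (a - c) integrable_on {0..} \<and>
         integral {0..} (FF a (a - c)) \<le> exp (a*\<delta>^4/120) * HH (a/6) c
            + (3/2) * ((1/\<delta> + (3/2) powr Mp) * exp (- (a*\<delta>\<^sup>2/7))) + (3/2) powr (1 + Mp - a)"
proof -
  define k where "k = a/6"
  have k: "k > 0" using a by (simp add: k_def)
  define \<beta> where "\<beta> = a - c"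
  have \<beta>: "\<beta> \<ge> 2" using b c by (simp add: \<beta>_def)
  define E1 where "E1 = exp (a*\<delta>^4/120)"
  define K2 where "K2 = (1/\<delta> + (3/2) powr Mp) * exp (- (a*\<delta>\<^sup>2/7))"
  define I0 where "I0 = integral {0..\<delta>} (hh k c)"
  define P1 where "P1 = (\<lambda>t. if t \<in> {0..\<delta>} then E1 * hh k c t else 0)"
  define P2 where "P2 = (\<lambda>t::real. if t \<in> {\<delta>..3/2} then K2 else 0)"
  define P3 where "P3 = (\<lambda>t. if t \<in> {3/2..} then t powr (-\<beta>) else 0)"
  define V3 where "V3 = - ((3/2) powr (-\<beta>+1)) / (-\<beta>+1)"
  have K2p: "K2 \<ge> 0" using d by (simp add: K2_def)
  have hint: "hh k c integrable_on {0..\<delta>}"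
    by (rule integrable_on_subinterval[OF gauss_int[OF k c(1)]]) auto
  have iP1: "(P1 has_integral (E1 * I0)) {0..}"
  proof -
    have "((\<lambda>t. E1 * hh k c t) has_integral (E1 * I0)) {0..\<delta>}"
      unfolding I0_def by (rule has_integral_mult_right[OF integrable_integral[OF hint]])
    moreover have "{0..\<delta>} \<inter> {0..} = {0..\<delta>}" by auto
    ultimately show ?thesis unfolding P1_def by (subst has_integral_restrict_Int) simp
  qed
  have iP2: "(P2 has_integral ((3/2 - \<delta>) * K2)) {0..}"
  proof -
    have "((\<lambda>t. K2) has_integral ((3/2 - \<delta>) * K2)) {\<delta>..3/2}"
      using has_integral_const_real[of K2 \<delta> "3/2"] d by simp
    moreover have eq: "{\<delta>..3/2} \<inter> {0..} = {\<delta>..3/2::real}" using d by auto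
    ultimately show ?thesis unfolding P2_def has_integral_restrict_Int eq by blast
  qed
  have iP3: "(P3 has_integral V3) {0..}"
  proof -
    have "((\<lambda>t. t powr (-\<beta>)) has_integral V3) {3/2..}"
      unfolding V3_def by (rule has_integral_powr_to_inf) (use \<beta> in auto)
    moreover have "{3/2..} \<inter> {0..} = {3/2::real..}" by auto
    ultimately show ?thesis unfolding P3_def by (subst has_integral_restrict_Int) simp
  qed
  have iP: "((\<lambda>t. P1 t + P2 t + P3 t) has_integral (E1 * I0 + (3/2 - \<delta>) * K2 + V3)) {0..}"
    by (intro has_integral_add iP1 iP2 iP3)
  have P1n: "P1 t \<ge> 0" for t by (simp add: P1_def E1_def hh_nonneg)
  have P2n: "P2 t \<ge> 0" for t using K2p by (simp add: P2_def)
  have P3n: "P3 t \<ge> 0" for t by (simp add: P3_def)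
  have pw: "FF a \<beta> t \<le> P1 t + P2 t + P3 t" if t: "t \<in> {0..}" for t
  proof -
    consider "t = 0" | "0 < t" "t \<le> \<delta>" | "\<delta> \<le> t" "t \<le> 3/2" | "3/2 \<le> t"
      using t by force
    thus ?thesis
    proof cases
      case 1
      thus ?thesis using P1n[of t] P2n[of t] P3n[of t] by (simp add: FF_zero)
    next
      case 2
      have t32: "t \<le> 3/2" using 2 d by linarith
      have "FF a \<beta> t \<le> t powr c * exp (a * (- t\<^sup>2/6 + t^4/120))"
        unfolding \<beta>_def by (rule FF_upper_small) (use 2 t32 a in auto)
      also have "\<dots> = hh k c t * exp (a * t^4/120)"
        by (simp add: hh_def k_def exp_add[symmetric] algebra_simps)
      also have "\<dots> \<le> hh k c t * E1"
      proof (rule mult_left_mono)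
        have "t^4 \<le> \<delta>^4" by (rule power_mono) (use 2 in auto)
        hence "a * t^4 \<le> a * \<delta>^4" by (rule mult_left_mono) (use a in auto)
        thus "exp (a * t^4/120) \<le> E1" unfolding E1_def by simp
      qed (simp add: hh_nonneg)
      also have "\<dots> = P1 t" using 2 by (simp add: P1_def mult.commute)
      finally show ?thesis using P2n[of t] P3n[of t] by linarith
    next
      case 3
      have "FF a \<beta> t \<le> t powr c * exp (a * (- t\<^sup>2/6 + t^4/120))"
        unfolding \<beta>_def by (rule FF_upper_small) (use 3 d a in auto)
      also have "\<dots> \<le> (1/\<delta> + (3/2) powr Mp) * exp (- (a*\<delta>\<^sup>2/7))"
        by (rule mult_mono[OF tpowr_bound exp_mid_bound]) (use 3 d c Mp a in auto)
      also have "\<dots> = P2 t" using 3 by (simp add: P2_def K2_def)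
      finally show ?thesis using P1n[of t] P3n[of t] by linarith
    next
      case 4
      have "FF a \<beta> t \<le> t powr (-\<beta>)" by (rule FF_upper_tail) (use 4 a in auto)
      also have "\<dots> = P3 t" using 4 by (simp add: P3_def)
      finally show ?thesis using P1n[of t] P2n[of t] by linarith
    qed
  qed
  have Fint: "FF a \<beta> integrable_on {0..}"
  proof (rule measurable_bounded_by_integrable_imp_integrable_real[OF FF_meas_on])
    show "(\<lambda>t. P1 t + P2 t + P3 t) integrable_on {0..}" using iP by blast
    show "\<And>x. x \<in> {0..} \<Longrightarrow> \<bar>FF a \<beta> x\<bar> \<le> P1 x + P2 x + P3 x" using pw by (simp add: FF_nonneg)
  qed simp
  have "integral {0..} (FF a \<beta>) \<le> E1 * I0 + (3/2 - \<delta>) * K2 + V3"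
    by (rule has_integral_le[OF integrable_integral[OF Fint] iP]) (rule pw)
  also have "E1 * I0 \<le> E1 * HH k c"
  proof (rule mult_left_mono)
    have "I0 \<le> integral {0..} (hh k c)" unfolding I0_def
      by (rule integral_subset_le) (auto simp: hint gauss_int[OF k c(1)] hh_nonneg)
    thus "I0 \<le> HH k c" using gauss_integral[OF k c(1)] by simp
  qed (simp add: E1_def)
  also have "(3/2 - \<delta>) * K2 \<le> (3/2) * K2" by (rule mult_right_mono) (use d K2p in auto)
  also have "V3 \<le> (3/2) powr (1 + Mp - a)"
  proof -
    have "V3 = (3/2) powr (1 - \<beta>) / (\<beta> - 1)" by (simp add: V3_def divide_simps) (simp add: algebra_simps)
    also have "\<dots> \<le> (3/2) powr (1 - \<beta>)" using \<beta> by (simp add: divide_le_eq)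
    also have "\<dots> \<le> (3/2) powr (1 + Mp - a)" using c by (intro powr_mono) (auto simp: \<beta>_def)
    finally show ?thesis .
  qed
  finally show ?thesis using Fint by (simp add: \<beta>_def E1_def K2_def k_def)
qed

lemma HH_half:
  assumes k: "k > 0" and c: "c > -1" and Mp: "c \<le> Mp"
  shows "HH (k/2) c \<le> 2 powr ((Mp+1)/2) * HH k c"
proof -
  define s where "s = (c+1)/2"
  have "HH (k/2) c = Gamma s / (2 * (k powr s / 2 powr s))"
    using k by (simp add: HH_def s_def powr_divide)
  also have "\<dots> = 2 powr s * HH k c" by (simp add: HH_def s_def field_simps)
  also have "\<dots> \<le> 2 powr ((Mp+1)/2) * HH k c"
    by (rule mult_right_mono) (use Mp HH_pos[OF k c] in \<open>auto simp: s_def intro!: powr_mono\<close>)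
  finally show ?thesis .
qed

lemma FF_lower_int:
  fixes a c Mp \<delta> :: real
  assumes a: "a > 0" and c: "-1 < c" "c \<le> Mp" and Mp: "0 \<le> Mp"
    and d: "0 < \<delta>" "\<delta> \<le> 1" and Fint: "FF a (a - c) integrable_on {0..}"
  shows "exp (- (a*\<delta>^4/10)) * (HH (a/6) c - exp (- (a*\<delta>\<^sup>2/12)) * 2 powr ((Mp+1)/2) * HH (a/6) c)
           \<le> integral {0..} (FF a (a - c))"
proof -
  define k where "k = a/6"
  have k: "k > 0" using a by (simp add: k_def)
  have k2: "k/2 > 0" using k by simp
  define E where "E = exp (- (a*\<delta>^4/10))"
  define D where "D = exp (- (a*\<delta>\<^sup>2/12))"
  define I0 where "I0 = integral {0..\<delta>} (hh k c)"
  have hint: "hh k c integrable_on {0..\<delta>}"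
    by (rule integrable_on_subinterval[OF gauss_int[OF k c(1)]]) auto
  define R1 where "R1 = (\<lambda>t. if t \<in> {0..\<delta>} then hh k c t else 0)"
  define R2 where "R2 = (\<lambda>t. D * hh (k/2) c t)"
  have iR1: "(R1 has_integral I0) {0..}"
  proof -
    have eq: "{0..\<delta>} \<inter> {0..} = {0..\<delta>::real}" by auto
    show ?thesis unfolding R1_def has_integral_restrict_Int eq I0_def
      using hint by blast
  qed
  have iR2: "(R2 has_integral (D * HH (k/2) c)) {0..}"
    unfolding R2_def by (rule has_integral_mult_right[OF gauss_has[OF k2 c(1)]])
  have pw1: "hh k c t \<le> R1 t + R2 t" if t: "t \<in> {0..}" for t
  proof (cases "t \<le> \<delta>")
    case True
    thus ?thesis using t by (simp add: R1_def R2_def D_def hh_nonneg)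
  next
    case False
    have "\<delta>\<^sup>2 \<le> t\<^sup>2" by (rule power_mono) (use False d in auto)
    hence "k * \<delta>\<^sup>2 \<le> k * t\<^sup>2" by (rule mult_left_mono) (use k in auto)
    hence "exp (-k*t\<^sup>2) \<le> D * exp (-(k/2)*t\<^sup>2)"
      unfolding D_def k_def by (simp add: exp_add[symmetric] field_simps)
    hence "t powr c * exp (-k*t\<^sup>2) \<le> t powr c * (D * exp (-(k/2)*t\<^sup>2))"
      by (rule mult_left_mono) simp
    thus ?thesis using False by (simp add: R1_def R2_def hh_def mult_ac)
  qed
  have "HH k c \<le> I0 + D * HH (k/2) c"
  proof -
    have "integral {0..} (hh k c) \<le> I0 + D * HH (k/2) c"
      by (rule has_integral_le[OF integrable_integral[OF gauss_int[OF k c(1)]] has_integral_add[OF iR1 iR2]])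
         (rule pw1)
    thus ?thesis using gauss_integral[OF k c(1)] by simp
  qed
  moreover have "D * HH (k/2) c \<le> D * (2 powr ((Mp+1)/2) * HH k c)"
    by (rule mult_left_mono[OF HH_half[OF k c]]) (simp_all add: D_def)
  ultimately have I0b: "HH k c - D * 2 powr ((Mp+1)/2) * HH k c \<le> I0" by (simp add: mult_ac)
  define Q where "Q = (\<lambda>t. if t \<in> {0..\<delta>} then E * hh k c t else 0)"
  have iQ: "(Q has_integral (E * I0)) {0..}"
  proof -
    have "((\<lambda>t. E * hh k c t) has_integral (E * I0)) {0..\<delta>}"
      unfolding I0_def by (rule has_integral_mult_right[OF integrable_integral[OF hint]])
    moreover have eq: "{0..\<delta>} \<inter> {0..} = {0..\<delta>::real}" by auto
    ultimately show ?thesis unfolding Q_def has_integral_restrict_Int eq by blast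
  qed
  have pw2: "Q t \<le> FF a (a - c) t" if t: "t \<in> {0..}" for t
  proof (cases "t \<in> {0<..\<delta>}")
    case True
    hence t0: "0 < t" "t \<le> \<delta>" by auto
    have "t^4 \<le> \<delta>^4" by (rule power_mono) (use t0 in auto)
    hence "a * t^4 \<le> a * \<delta>^4" by (rule mult_left_mono) (use a in auto)
    hence "E \<le> exp (- a * t^4/10)" unfolding E_def by simp
    hence "hh k c t * E \<le> hh k c t * exp (- a * t^4/10)" by (rule mult_left_mono) (simp add: hh_nonneg)
    also have "\<dots> = t powr c * exp (- a * t\<^sup>2/6) * exp (- a * t^4/10)"
      by (simp add: hh_def k_def)
    also have "\<dots> \<le> FF a (a - c) t"
      by (rule FF_lower_small) (use t0 d a in auto)
    finally show ?thesis using True by (simp add: Q_def mult.commute)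
  next
    case False
    thus ?thesis using t by (auto simp: Q_def FF_nonneg FF_zero hh_def)
  qed
  have Y: "E * I0 \<le> integral {0..} (FF a (a - c))"
    by (rule has_integral_le[OF iQ integrable_integral[OF Fint]]) (rule pw2)
  have X: "E * (HH k c - D * 2 powr ((Mp+1)/2) * HH k c) \<le> E * I0"
    by (rule mult_left_mono[OF I0b]) (simp add: E_def)
  from order_trans[OF X Y] show ?thesis by (simp only: E_def D_def k_def)
qed

definition UU :: "real \<Rightarrow> real \<Rightarrow> real" where
  "UU Mp a = exp (a * (a powr (-1/3))^4 / 120) + ((3/2) * ((1 / a powr (-1/3) + (3/2) powr Mp) * exp (- (a * (a powr (-1/3))\<^sup>2 / 7))) + (3/2) powr (1 + Mp - a)) * (exp 1 * (Mp+1) * (a/6) powr ((Mp+1)/2))"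

definition LL :: "real \<Rightarrow> real \<Rightarrow> real" where
  "LL Mp a = exp (- (a * (a powr (-1/3))^4 / 10)) * (1 - exp (- (a * (a powr (-1/3))\<^sup>2 / 12)) * 2 powr ((Mp+1)/2))"

lemma UU_lim: "Mp \<ge> 0 \<Longrightarrow> (UU Mp \<longlongrightarrow> 1) at_top"
proof -
  assume Mp: "Mp \<ge> 0"
  have A: "((\<lambda>a::real. exp (a * (a powr (-1/3))^4 / 120)) \<longlongrightarrow> 1) at_top" by real_asymp
  have B: "((\<lambda>a::real. ((3/2) * ((1 / a powr (-1/3) + (3/2) powr Mp) * exp (- (a * (a powr (-1/3))\<^sup>2 / 7))) + (3/2) powr (1 + Mp - a)) * (exp 1 * (Mp+1) * (a/6) powr ((Mp+1)/2))) \<longlongrightarrow> 0) at_top"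
    using Mp by real_asymp
  show ?thesis unfolding UU_def using tendsto_add[OF A B] by simp
qed

lemma LL_lim: "(LL Mp \<longlongrightarrow> 1) at_top"
  unfolding LL_def by real_asymp

lemma ratio_bounds:
  fixes a c Mp :: real
  assumes a: "a \<ge> 6" and c: "-1 < c" "c \<le> Mp" and Mp: "0 \<le> Mp" and b: "a - Mp \<ge> 2"
  shows "LL Mp a \<le> I_int a (a - c) / ((6/a) powr ((c+1)/2) * Gamma ((c+1)/2))
       \<and> I_int a (a - c) / ((6/a) powr ((c+1)/2) * Gamma ((c+1)/2)) \<le> UU Mp a"
proof -
  define \<delta> where "\<delta> = a powr (-1/3)"
  have d0: "\<delta> > 0" using a by (simp add: \<delta>_def)
  have "a powr (-1/3) \<le> a powr 0" using a by (intro powr_mono) auto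
  hence d1: "\<delta> \<le> 1" using a by (simp add: \<delta>_def)
  have a0: "a > 0" using a by simp
  define H where "H = HH (a/6) c"
  define J where "J = integral {0..} (FF a (a - c))"
  define p where "p = (Mp+1)/2"
  have Hp: "H > 0" unfolding H_def by (rule HH_pos) (use a c in auto)
  from FF_upper_int[OF a0 c Mp d0 d1 b] have Fint: "FF a (a - c) integrable_on {0..}"
    and JU: "J \<le> exp (a*\<delta>^4/120) * H + (3/2) * ((1/\<delta> + (3/2) powr Mp) * exp (- (a*\<delta>\<^sup>2/7))) + (3/2) powr (1 + Mp - a)"
    by (auto simp: J_def H_def)
  have JL: "exp (- (a*\<delta>^4/10)) * (H - exp (- (a*\<delta>\<^sup>2/12)) * 2 powr p * H) \<le> J"
    using FF_lower_int[OF a0 c Mp d0 d1 Fint] by (simp add: J_def H_def p_def)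
  have HL: "exp (-1) * (6/a) powr p / (Mp+1) \<le> H"
    using H_lower[OF a c] by (simp add: H_def p_def)
  have I: "I_int a (a - c) = 2 * J" using I_int_eq[OF Fint] by (simp add: J_def)
  have G: "(6/a) powr ((c+1)/2) * Gamma ((c+1)/2) = 2 * H"
  proof -
    have "(6/a) powr ((c+1)/2) = 1 / (a/6) powr ((c+1)/2)" using a0
      by (simp add: powr_divide)
    moreover have "(a/6) powr ((c+1)/2) > 0" using a0 by simp
    ultimately show ?thesis by (simp add: H_def HH_def field_simps)
  qed
  have R: "I_int a (a - c) / ((6/a) powr ((c+1)/2) * Gamma ((c+1)/2)) = J / H"
    unfolding I G by simp
  define rest where "rest = (3/2) * ((1/\<delta> + (3/2) powr Mp) * exp (- (a*\<delta>\<^sup>2/7))) + (3/2) powr (1 + Mp - a)"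
  have rest0: "rest \<ge> 0" using d0 by (simp add: rest_def)
  define m where "m = exp (-1) * (6/a) powr p / (Mp+1)"
  have m0: "m > 0" using a0 Mp by (simp add: m_def)
  have minv: "1 / m = exp 1 * (Mp+1) * (a/6) powr p"
  proof -
    have "(6/a) powr p = 1 / (a/6) powr p" using a0 by (simp add: powr_divide)
    moreover have "(a/6) powr p > 0" using a0 by simp
    ultimately show ?thesis using Mp by (simp add: m_def exp_minus field_simps)
  qed
  have up: "J / H \<le> UU Mp a"
  proof -
    have rm: "rest / H \<le> rest / m"
    proof (rule divide_left_mono)
      show "m \<le> H" using HL by (simp add: m_def)
      show "0 \<le> rest" by (rule rest0)
      show "0 < H * m" using Hp m0 by simp
    qed
    have rm2: "rest / m = rest * (exp 1 * (Mp+1) * (a/6) powr p)"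
    proof -
      have "rest / m = rest * (1 / m)" by simp
      thus ?thesis by (simp only: minv)
    qed
    have "J / H \<le> (exp (a*\<delta>^4/120) * H + rest) / H"
      using JU Hp by (simp add: rest_def divide_right_mono)
    also have "\<dots> = exp (a*\<delta>^4/120) + rest / H" using Hp by (simp add: field_simps)
    finally have "J / H \<le> exp (a*\<delta>^4/120) + rest * (exp 1 * (Mp+1) * (a/6) powr p)"
      using rm rm2 by linarith
    also have "exp (a*\<delta>^4/120) + rest * (exp 1 * (Mp+1) * (a/6) powr p) = UU Mp a"
      unfolding UU_def rest_def \<delta>_def p_def by (rule refl)
    finally show ?thesis .
  qed
  have lo: "LL Mp a \<le> J / H"
  proof -
    define X where "X = exp (- (a*\<delta>\<^sup>2/12)) * 2 powr p"
    have "LL Mp a = exp (- (a*\<delta>^4/10)) * (1 - X)"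
      unfolding LL_def X_def \<delta>_def p_def by (rule refl)
    also have "1 - X = (H - X * H) / H" using Hp by (simp add: diff_divide_distrib)
    also have "exp (- (a*\<delta>^4/10)) * ((H - X * H) / H) = exp (- (a*\<delta>^4/10)) * (H - X * H) / H"
      by (rule times_divide_eq_right)
    also have "\<dots> \<le> J / H" by (rule divide_right_mono) (use JL Hp in \<open>auto simp: X_def\<close>)
    finally show ?thesis .
  qed
  show ?thesis using up lo R by simp
qed

lemma main_gen:
  fixes \<beta> :: "real \<Rightarrow> real" and M :: real
  assumes ev: "\<forall>\<^sub>F \<alpha> in at_top. -1 < \<alpha> - \<beta> \<alpha> \<and> \<alpha> - \<beta> \<alpha> \<le> M"
  shows "((\<lambda>\<alpha>. I_int \<alpha> (\<beta> \<alpha>) /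
            ((6 / \<alpha>) powr ((\<alpha> - \<beta> \<alpha> + 1) / 2) * Gamma ((\<alpha> - \<beta> \<alpha> + 1) / 2)))
           \<longlongrightarrow> 1) at_top"
proof -
  define Mp where "Mp = \<bar>M\<bar>"
  have Mp: "0 \<le> Mp" by (simp add: Mp_def)
  define f where "f = (\<lambda>\<alpha>. I_int \<alpha> (\<beta> \<alpha>) /
            ((6 / \<alpha>) powr ((\<alpha> - \<beta> \<alpha> + 1) / 2) * Gamma ((\<alpha> - \<beta> \<alpha> + 1) / 2)))"
  have ev2: "\<forall>\<^sub>F \<alpha> in at_top. LL Mp \<alpha> \<le> f \<alpha> \<and> f \<alpha> \<le> UU Mp \<alpha>"
    using ev eventually_ge_at_top[of "max 6 (Mp+2)"]
  proof eventually_elim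
    case (elim \<alpha>)
    have c: "-1 < \<alpha> - \<beta> \<alpha>" "\<alpha> - \<beta> \<alpha> \<le> Mp" using elim by (auto simp: Mp_def)
    have a: "\<alpha> \<ge> 6" "\<alpha> - Mp \<ge> 2" using elim by auto
    from ratio_bounds[OF a(1) c Mp a(2)] show ?case by (simp add: f_def)
  qed
  have "(f \<longlongrightarrow> 1) at_top"
  proof (rule tendsto_sandwich[OF _ _ LL_lim UU_lim[OF Mp]])
    show "\<forall>\<^sub>F \<alpha> in at_top. LL Mp \<alpha> \<le> f \<alpha>" using ev2 by (rule eventually_mono) simp
    show "\<forall>\<^sub>F \<alpha> in at_top. f \<alpha> \<le> UU Mp \<alpha>" using ev2 by (rule eventually_mono) simp
  qed
  thus ?thesis by (simp add: f_def)
qed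

theorem mainTheorem6:
  fixes \<beta> :: "real \<Rightarrow> real" and M :: real
  assumes "\<forall>\<^sub>F \<alpha> in at_top. -1 < \<alpha> - \<beta> \<alpha> \<and> \<alpha> - \<beta> \<alpha> \<le> M"
  shows "((\<lambda>\<alpha>. I_int \<alpha> (\<beta> \<alpha>) /
            ((6 / \<alpha>) powr ((\<alpha> - \<beta> \<alpha> + 1) / 2) * Gamma ((\<alpha> - \<beta> \<alpha> + 1) / 2)))
           \<longlongrightarrow> 1) at_top
       \<and> ((\<lambda>\<alpha>. I_int \<alpha> (of_int \<lfloor>\<alpha>\<rfloor>) /
            ((6 / \<alpha>) powr ((\<alpha> - of_int \<lfloor>\<alpha>\<rfloor> + 1) / 2) * Gamma ((\<alpha> - of_int \<lfloor>\<alpha>\<rfloor> + 1) / 2)))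
           \<longlongrightarrow> 1) at_top"
proof
  show "((\<lambda>\<alpha>. I_int \<alpha> (\<beta> \<alpha>) /
            ((6 / \<alpha>) powr ((\<alpha> - \<beta> \<alpha> + 1) / 2) * Gamma ((\<alpha> - \<beta> \<alpha> + 1) / 2)))
           \<longlongrightarrow> 1) at_top" by (rule main_gen[OF assms])
  have "\<forall>\<^sub>F \<alpha> in at_top. -1 < \<alpha> - of_int \<lfloor>\<alpha>\<rfloor> \<and> \<alpha> - of_int \<lfloor>\<alpha>\<rfloor> \<le> (1::real)"
  proof (rule always_eventually, intro allI conjI)
    fix \<alpha> :: real
    show "-1 < \<alpha> - of_int \<lfloor>\<alpha>\<rfloor>" using of_int_floor_le[of \<alpha>] by linarith
    show "\<alpha> - of_int \<lfloor>\<alpha>\<rfloor> \<le> 1" using real_of_int_floor_add_one_ge[of \<alpha>] by linarith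
  qed
  thus "((\<lambda>\<alpha>. I_int \<alpha> (of_int \<lfloor>\<alpha>\<rfloor>) /
            ((6 / \<alpha>) powr ((\<alpha> - of_int \<lfloor>\<alpha>\<rfloor> + 1) / 2) * Gamma ((\<alpha> - of_int \<lfloor>\<alpha>\<rfloor> + 1) / 2)))
           \<longlongrightarrow> 1) at_top" by (rule main_gen)
qed

end
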